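(* Let $X$ be a locally path connected and semilocally simply connected space. Equip $\mathcal P X$ with the compact-open topology and $\Pi_1(X)$ with the CO' topology. Then the quotient map $q\colon\mathcal P X\to\Pi_1(X)$, $\gamma\mapsto[\gamma]$, is an open map.
   Context: $\mathcal P X=C([0,1],X)$ is the set of paths in $X$; $[\gamma]$ is the endpoint-fixing path-homotopy class of $\gamma$; $\Pi_1(X)$ is the set of such classes. A subset $V\subseteq X$ is relatively inessential if for $x\in V$ the map $\pi_1(V,x)\to\pi_1(X,x)$ induced by inclusion is trivial; $X$ is semilocally simply connected if every point has a relatively inessential neighbourhood. The CO' topology on $\Pi_1(X)$ is the quotient topology induced by $q$ from the compact-open topology on $\mathcal P X$. *)

theory Defs
  imports "HOL-Analysis.Analysis" "HOL-Library.FuncSet"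
begin

abbreviation unit_interval :: "real topology" where
  "unit_interval \<equiv> top_of_set {0..1}"

text \<open>Paths are represented as functions
  real => 'a that are continuous on [0,1] and normalised (undefined) outside [0,1],
  so that every element of C([0,1],X) has exactly one representative.\<close>
definition path_space :: "'a topology \<Rightarrow> (real \<Rightarrow> 'a) set" where
  "path_space X = {g. continuous_map unit_interval X g \<and> g \<in> extensional {0..1}}"

text \<open>Compact-open topology on PX: generated by the subbasis
  {g in PX. g ` K \<subseteq> U} with K compact in [0,1], U open in X.
  (K = {} yields PX itself, so the topspace is PX.)\<close>
definition compact_open_paths :: "'a topology \<Rightarrow> (real \<Rightarrow> 'a) topology" where
  "compact_open_paths X = topology_generated_by
     {{g \<in> path_space X. g ` K \<subseteq> U} | K U. K \<subseteq> {0..1} \<and> compact K \<and> openin X U}"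

definition path_homotopic :: "'a topology \<Rightarrow> (real \<Rightarrow> 'a) \<Rightarrow> (real \<Rightarrow> 'a) \<Rightarrow> bool" where
  "path_homotopic X g h \<longleftrightarrow>
     homotopic_with (\<lambda>k. k 0 = g 0 \<and> k 1 = g 1) unit_interval X g h"

definition path_class :: "'a topology \<Rightarrow> (real \<Rightarrow> 'a) \<Rightarrow> (real \<Rightarrow> 'a) set" where
  "path_class X g = {h \<in> path_space X. path_homotopic X g h}"

definition fundamental_groupoid :: "'a topology \<Rightarrow> (real \<Rightarrow> 'a) set set" where
  "fundamental_groupoid X = path_class X ` path_space X"

definition quotient_topology :: "'a topology \<Rightarrow> ('a \<Rightarrow> 'b) \<Rightarrow> 'b topology" where
  "quotient_topology P f = topology (\<lambda>U. U \<subseteq> f ` topspace P \<and>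
       openin P {x \<in> topspace P. f x \<in> U})"

lemma istopology_quotient:
  "istopology (\<lambda>U. U \<subseteq> f ` topspace P \<and> openin P {x \<in> topspace P. f x \<in> U})"
proof -
  have 1: "{x \<in> topspace P. f x \<in> S \<inter> T} = {x \<in> topspace P. f x \<in> S} \<inter> {x \<in> topspace P. f x \<in> T}" for S T
    by blast
  have 2: "{x \<in> topspace P. f x \<in> \<Union>K} = \<Union>((\<lambda>U. {x \<in> topspace P. f x \<in> U}) ` K)" for K
    by blast
  show ?thesis unfolding istopology_def
  proof (rule conjI; intro allI impI)
    fix S T assume "S \<subseteq> f ` topspace P \<and> openin P {x \<in> topspace P. f x \<in> S}"
      "T \<subseteq> f ` topspace P \<and> openin P {x \<in> topspace P. f x \<in> T}"
    then show "S \<inter> T \<subseteq> f ` topspace P \<and> openin P {x \<in> topspace P. f x \<in> S \<inter> T}"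
      using openin_Int[of P "{x \<in> topspace P. f x \<in> S}" "{x \<in> topspace P. f x \<in> T}"]
      by (simp only: 1) blast
  next
    fix K assume "\<forall>U\<in>K. U \<subseteq> f ` topspace P \<and> openin P {x \<in> topspace P. f x \<in> U}"
    then show "\<Union>K \<subseteq> f ` topspace P \<and> openin P {x \<in> topspace P. f x \<in> \<Union>K}"
      by (simp only: 2) (blast intro!: openin_Union)
  qed
qed

definition CO'_topology :: "'a topology \<Rightarrow> (real \<Rightarrow> 'a) set topology" where
  "CO'_topology X = quotient_topology (compact_open_paths X) (path_class X)"

definition relatively_inessential :: "'a topology \<Rightarrow> 'a set \<Rightarrow> bool" where
  "relatively_inessential X V \<longleftrightarrow> V \<subseteq> topspace X \<and>
     (\<forall>x\<in>V. \<forall>g. continuous_map unit_interval (subtopology X V) g \<and> g 0 = x \<and> g 1 = x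
        \<longrightarrow> homotopic_with (\<lambda>k. k 0 = x \<and> k 1 = x) unit_interval X g (\<lambda>t. x))"

definition semilocally_simply_connected :: "'a topology \<Rightarrow> bool" where
  "semilocally_simply_connected X \<longleftrightarrow>
     (\<forall>x\<in>topspace X. \<exists>U V. openin X U \<and> x \<in> U \<and> U \<subseteq> V \<and> relatively_inessential X V)"

end

theory Submission
  imports Defs
begin

definition pth :: "'a topology \<Rightarrow> (real \<Rightarrow> 'a) \<Rightarrow> bool" where
  "pth X p \<longleftrightarrow> continuous_map (top_of_set {0..1}) X p"

definition jn :: "(real \<Rightarrow> 'a) \<Rightarrow> (real \<Rightarrow> 'a) \<Rightarrow> real \<Rightarrow> 'a" where
  "jn p q = (\<lambda>t. if t \<le> 1/2 then p (2*t) else q (2*t - 1))"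

definition rv :: "(real \<Rightarrow> 'a) \<Rightarrow> real \<Rightarrow> 'a" where
  "rv p = (\<lambda>t. p (1 - t))"

definition sb :: "(real \<Rightarrow> 'a) \<Rightarrow> real \<Rightarrow> real \<Rightarrow> real \<Rightarrow> 'a" where
  "sb p a b = (\<lambda>t. p (a + (b - a) * t))"

lemma cm_comp:
  assumes "continuous_map (top_of_set T) X f" "continuous_on S g" "g ` S \<subseteq> T"
  shows "continuous_map (top_of_set S) X (\<lambda>x. f (g x))"
proof -
  have "continuous_map (top_of_set S) (top_of_set T) g"
    using assms by (auto simp: continuous_map_subtopology_eu)
  from continuous_map_compose[OF this assms(1)] show ?thesis by (simp add: o_def)
qed

lemma paste:
  fixes p q :: "'b::topological_space \<Rightarrow> real"
  assumes "continuous_on S p" "continuous_on S q"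
    "continuous_map (top_of_set {x\<in>S. p x \<le> q x}) Y f"
    "continuous_map (top_of_set {x\<in>S. q x \<le> p x}) Y g"
    "\<And>x. x \<in> S \<Longrightarrow> p x = q x \<Longrightarrow> f x = g x"
  shows "continuous_map (top_of_set S) Y (\<lambda>x. if p x \<le> q x then f x else g x)"
proof (rule continuous_map_cases_le)
  show "continuous_map (top_of_set S) euclideanreal p" "continuous_map (top_of_set S) euclideanreal q"
    using assms by (auto simp: continuous_map_iff_continuous)
  have e1: "subtopology (top_of_set S) {x \<in> topspace (top_of_set S). p x \<le> q x} = top_of_set {x\<in>S. p x \<le> q x}"
    by (simp add: subtopology_subtopology Int_def conj_commute)
  have e2: "subtopology (top_of_set S) {x \<in> topspace (top_of_set S). q x \<le> p x} = top_of_set {x\<in>S. q x \<le> p x}"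
    by (simp add: subtopology_subtopology Int_def conj_commute)
  show "continuous_map (subtopology (top_of_set S) {x \<in> topspace (top_of_set S). p x \<le> q x}) Y f"
    using assms(3) e1 by simp
  show "continuous_map (subtopology (top_of_set S) {x \<in> topspace (top_of_set S). q x \<le> p x}) Y g"
    using assms(4) e2 by simp
qed (use assms in auto)

lemma ph_intro:
  fixes H :: "real \<times> real \<Rightarrow> 'a"
  assumes "continuous_map (top_of_set ({0..1} \<times> {0..1})) X H"
    "\<And>t. t \<in> {0..1} \<Longrightarrow> H (0, t) = p t"
    "\<And>t. t \<in> {0..1} \<Longrightarrow> H (1, t) = q t"
    "\<And>s. s \<in> {0..1} \<Longrightarrow> H (s, 0) = p 0 \<and> H (s, 1) = p 1"
  shows "path_homotopic X p q"
  unfolding path_homotopic_def homotopic_with_def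
proof (intro exI conjI)
  let ?K = "\<lambda>x. if fst x = 0 then p (snd x) else if fst x = 1 then q (snd x) else H x"
  show "continuous_map (prod_topology (top_of_set {0..1}) (top_of_set {0..1})) X ?K"
    by (rule continuous_map_eq[OF assms(1)[folded prod_topology_subtopology_eu]])
       (use assms in auto)
  show "\<forall>x. ?K (0, x) = p x" "\<forall>x. ?K (1, x) = q x" by auto
  show "\<forall>t\<in>{0..1}. ?K (t, 0) = p 0 \<and> ?K (t, 1) = p 1"
  proof
    fix s :: real assume s: "s \<in> {0..1}"
    have q0: "q 0 = p 0" using assms(3)[of 0] assms(4)[of 1] by simp
    have q1: "q 1 = p 1" using assms(3)[of 1] assms(4)[of 1] by simp
    show "?K (s, 0) = p 0 \<and> ?K (s, 1) = p 1"
      using assms(4)[OF s] q0 q1 by simp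
  qed
qed

lemma ph_elim:
  assumes "path_homotopic X p q"
  obtains H :: "real \<times> real \<Rightarrow> 'a" where "continuous_map (top_of_set ({0..1} \<times> {0..1})) X H"
    "\<And>t. H (0, t) = p t" "\<And>t. H (1, t) = q t"
    "\<And>s. s \<in> {0..1} \<Longrightarrow> H (s, 0) = p 0 \<and> H (s, 1) = p 1"
  using assms unfolding path_homotopic_def homotopic_with_def
  by auto

lemma ph_pth:
  assumes "path_homotopic X p q"
  shows "pth X p" "pth X q" "q 0 = p 0" "q 1 = p 1"
proof -
  obtain H :: "real \<times> real \<Rightarrow> 'a" where H: "continuous_map (top_of_set ({0..1} \<times> {0..1})) X H"
    "\<And>t. H (0, t) = p t" "\<And>t. H (1, t) = q t"
    "\<And>s. s \<in> {0..1} \<Longrightarrow> H (s, 0) = p 0 \<and> H (s, 1) = p 1"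
    using ph_elim[OF assms] by blast
  have "continuous_map (top_of_set {0..1}) X (\<lambda>t. H (0::real, t))"
    by (rule cm_comp[OF H(1)]) (auto intro!: continuous_intros)
  then show "pth X p" using H(2) by (simp add: pth_def)
  have "continuous_map (top_of_set {0..1}) X (\<lambda>t. H (1::real, t))"
    by (rule cm_comp[OF H(1)]) (auto intro!: continuous_intros)
  then show "pth X q" using H(3) by (simp add: pth_def)
  show "q 0 = p 0" "q 1 = p 1" using H(3)[of 0] H(3)[of 1] H(4)[of 1] by auto
qed

lemma ph_sym:
  assumes h: "path_homotopic X p q" shows "path_homotopic X q p"
proof -
  have e: "q 0 = p 0" "q 1 = p 1" using ph_pth[OF h] by auto
  have "homotopic_with (\<lambda>k. k 0 = p 0 \<and> k 1 = p 1) unit_interval X q p"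
    using h unfolding path_homotopic_def by (rule homotopic_with_symD)
  then show ?thesis unfolding path_homotopic_def e .
qed

lemma ph_trans:
  assumes h1: "path_homotopic X p q" and h2: "path_homotopic X q r" shows "path_homotopic X p r"
proof -
  have e: "q 0 = p 0" "q 1 = p 1" using ph_pth[OF h1] by auto
  have "homotopic_with (\<lambda>k. k 0 = p 0 \<and> k 1 = p 1) unit_interval X q r"
    using h2 unfolding path_homotopic_def e .
  with h1 show ?thesis unfolding path_homotopic_def by (rule homotopic_with_trans)
qed

lemma conv_I: "a \<in> {0..1::real} \<Longrightarrow> b \<in> {0..1} \<Longrightarrow> s \<in> {0..1} \<Longrightarrow> (1 - s) * a + s * b \<in> {0..1}"
proof -
  assume "a \<in> {0..1::real}" "b \<in> {0..1}" "s \<in> {0..1}"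
  then have h: "0\<le>a" "a\<le>1" "0\<le>b" "b\<le>1" "0\<le>s" "s\<le>1" by simp_all
  have 1: "0 \<le> (1-s)*a" using h by simp
  have 2: "0 \<le> s*b" using h by simp
  have 3: "(1-s)*a \<le> (1-s)*1" using h by (intro mult_left_mono) simp_all
  have 4: "s*b \<le> s*1" using h by (intro mult_left_mono) simp_all
  show ?thesis using 1 2 3 4 by simp
qed

lemma ph_reparam:
  assumes p: "pth X p" and cpsi: "continuous_on {0..1} u" and cchi: "continuous_on {0..1} v"
    and ipsi: "u ` {0..1} \<subseteq> {0..1}" and ichi: "v ` {0..1} \<subseteq> {0..1}"
    and e0: "u 0 = v 0" and e1: "u 1 = v 1"
    and f: "\<And>t. t \<in> {0..1} \<Longrightarrow> f t = p (u t)"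
    and g: "\<And>t. t \<in> {0..1} \<Longrightarrow> g t = p (v t)"
  shows "path_homotopic X f g"
proof (rule ph_intro)
  let ?m = "\<lambda>x::real\<times>real. (1 - fst x) * u (snd x) + fst x * v (snd x)"
  have "continuous_on ({0..1} \<times> {0..1}) ?m"
    by (intro continuous_intros continuous_on_compose2[OF cpsi] continuous_on_compose2[OF cchi]) auto
  moreover have "?m ` ({0..1} \<times> {0..1}) \<subseteq> {0..1}"
  proof
    fix x assume "x \<in> ?m ` ({0..1} \<times> {0..1})"
    then obtain s t where st: "s \<in> {0..1}" "t \<in> {0..1}" "x = ?m (s,t)" by auto
    have "u t \<in> {0..1}" "v t \<in> {0..1}" using ipsi ichi st(2) by blast+
    then show "x \<in> {0..1}" using conv_I[of "u t" "v t" s] st by simp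
  qed
  ultimately show "continuous_map (top_of_set ({0..1} \<times> {0..1})) X (\<lambda>x. p (?m x))"
    by (rule cm_comp[OF p[unfolded pth_def]])
  show "p (?m (0, t)) = f t" if "t \<in> {0..1}" for t using f that by simp
  show "p (?m (1, t)) = g t" if "t \<in> {0..1}" for t using g that by simp
  show "p (?m (s, 0)) = f 0 \<and> p (?m (s, 1)) = f 1" if "s \<in> {0..1}" for s
    using f[of 0] f[of 1] e0 e1 by (simp add: algebra_simps)
qed

lemma ph_eqI: "pth X p \<Longrightarrow> (\<And>t. t \<in> {0..1} \<Longrightarrow> f t = p t) \<Longrightarrow> (\<And>t. t \<in> {0..1} \<Longrightarrow> g t = p t)
   \<Longrightarrow> path_homotopic X f g"
  by (rule ph_reparam[where u=id and v=id]) auto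

lemma ph_refl: "pth X p \<Longrightarrow> path_homotopic X p p"
  by (rule ph_eqI) auto

lemma half_aux: "(t::real) * 2 = 1 \<Longrightarrow> 2 * t - 1 = 0 \<and> 2 * t = 1"
  by simp

lemma pth_jn:
  assumes "pth X p" "pth X q" "p 1 = q 0"
  shows "pth X (jn p q)"
  unfolding pth_def jn_def
proof (rule paste)
  show "continuous_map (top_of_set {x \<in> {0..1}. x \<le> 1 / 2}) X (\<lambda>t. p (2 * t))"
    by (rule cm_comp[OF assms(1)[unfolded pth_def]]) (auto intro!: continuous_intros)
  show "continuous_map (top_of_set {x \<in> {0..1}. 1 / 2 \<le> x}) X (\<lambda>t. q (2 * t - 1))"
    by (rule cm_comp[OF assms(2)[unfolded pth_def]]) (auto intro!: continuous_intros)
  show "p (2 * x) = q (2 * x - 1)" if "x \<in> {0..1}" "x = 1/2" for x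
  proof -
    have e: "2 * x = 1" using that(2) by simp
    show ?thesis unfolding e using assms(3) by simp
  qed
qed (auto intro!: continuous_intros)

lemma pth_rv: "pth X p \<Longrightarrow> pth X (rv p)"
  unfolding pth_def rv_def
  by (rule cm_comp) (auto intro!: continuous_intros)

lemma pth_sb: "pth X p \<Longrightarrow> a \<in> {0..1} \<Longrightarrow> b \<in> {0..1} \<Longrightarrow> pth X (sb p a b)"
  unfolding pth_def sb_def
  apply (rule cm_comp, assumption)
   apply (auto intro!: continuous_intros)
  subgoal for t using conv_I[of a b t] by (simp add: algebra_simps)
  subgoal for t using conv_I[of a b t] by (simp add: algebra_simps)
  done

lemma ph_jn:
  assumes "path_homotopic X p p'" "path_homotopic X q q'" "p 1 = q 0"
  shows "path_homotopic X (jn p q) (jn p' q')"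
proof -
  obtain F :: "real \<times> real \<Rightarrow> 'a" where F: "continuous_map (top_of_set ({0..1} \<times> {0..1})) X F"
    "\<And>t. F (0, t) = p t" "\<And>t. F (1, t) = p' t"
    "\<And>s. s \<in> {0..1} \<Longrightarrow> F (s, 0) = p 0 \<and> F (s, 1) = p 1"
    using ph_elim[OF assms(1)] by blast
  obtain G :: "real \<times> real \<Rightarrow> 'a" where G: "continuous_map (top_of_set ({0..1} \<times> {0..1})) X G"
    "\<And>t. G (0, t) = q t" "\<And>t. G (1, t) = q' t"
    "\<And>s. s \<in> {0..1} \<Longrightarrow> G (s, 0) = q 0 \<and> G (s, 1) = q 1"
    using ph_elim[OF assms(2)] by blast
  show ?thesis
  proof (rule ph_intro)
    let ?H = "\<lambda>x::real\<times>real. if snd x \<le> 1/2 then F (fst x, 2 * snd x) else G (fst x, 2 * snd x - 1)"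
    show "continuous_map (top_of_set ({0..1} \<times> {0..1})) X ?H"
    proof (rule paste)
      show "continuous_map (top_of_set {x \<in> {0..1} \<times> {0..1}. snd x \<le> 1 / 2}) X (\<lambda>x. F (fst x, 2 * snd x))"
        by (rule cm_comp[OF F(1)]) (auto intro!: continuous_intros)
      show "continuous_map (top_of_set {x \<in> {0..1} \<times> {0..1}. 1 / 2 \<le> snd x}) X (\<lambda>x. G (fst x, 2 * snd x - 1))"
        by (rule cm_comp[OF G(1)]) (auto intro!: continuous_intros)
          show "F (fst x, 2 * snd x) = G (fst x, 2 * snd x - 1)" if "x \<in> {0..1} \<times> {0..1}" "snd x = 1/2" for x
      proof -
        have e: "2 * snd x = 1" using that(2) by simp
        show ?thesis unfolding e using F(4)[of "fst x"] G(4)[of "fst x"] assms(3) that(1) by auto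
      qed
    qed (auto intro!: continuous_intros)
    show "?H (0, t) = jn p q t" for t by (simp add: jn_def F(2) G(2))
    show "?H (1, t) = jn p' q' t" for t by (simp add: jn_def F(3) G(3))
    show "?H (s, 0) = jn p q 0 \<and> ?H (s, 1) = jn p q 1" if "s \<in> {0..1}" for s
      using F(4)[OF that] G(4)[OF that] by (simp add: jn_def)
  qed
qed

lemma ph_cancel:
  assumes "pth X p"
  shows "path_homotopic X (jn p (rv p)) (\<lambda>t. p 0)"
proof (rule ph_intro)
  let ?H = "\<lambda>x::real\<times>real. if snd x \<le> 1/2 then p (2 * snd x * (1 - fst x)) else p ((2 - 2 * snd x) * (1 - fst x))"
  show "continuous_map (top_of_set ({0..1} \<times> {0..1})) X ?H"
  proof (rule paste)
    show "continuous_map (top_of_set {x \<in> {0..1} \<times> {0..1}. snd x \<le> 1 / 2}) X (\<lambda>x. p (2 * snd x * (1 - fst x)))"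
    proof (rule cm_comp[where g="\<lambda>x::real\<times>real. 2 * snd x * (1 - fst x)", OF assms[unfolded pth_def]])
      show "(\<lambda>x::real\<times>real. 2 * snd x * (1 - fst x)) ` {x \<in> {0..1} \<times> {0..1}. snd x \<le> 1 / 2} \<subseteq> {0..1}"
      proof (rule image_subsetI)
        fix x :: "real\<times>real" assume "x \<in> {x \<in> {0..1} \<times> {0..1}. snd x \<le> 1 / 2}"
        then have h: "0 \<le> 2 * snd x" "2 * snd x \<le> 1" "0 \<le> 1 - fst x" "1 - fst x \<le> 1" by auto
        have "2 * snd x*(1-fst x) \<le> 1 * 1" using h by (intro mult_mono) auto
        moreover have "0 \<le> 2 * snd x*(1-fst x)" using h by simp
        ultimately show "2 * snd x * (1 - fst x) \<in> {0..1}" by simp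
      qed
    qed (auto intro!: continuous_intros)
    show "continuous_map (top_of_set {x \<in> {0..1} \<times> {0..1}. 1 / 2 \<le> snd x}) X (\<lambda>x. p ((2 - 2 * snd x) * (1 - fst x)))"
    proof (rule cm_comp[where g="\<lambda>x::real\<times>real. (2 - 2 * snd x) * (1 - fst x)", OF assms[unfolded pth_def]])
      show "(\<lambda>x::real\<times>real. (2 - 2 * snd x) * (1 - fst x)) ` {x \<in> {0..1} \<times> {0..1}. 1/2 \<le> snd x} \<subseteq> {0..1}"
      proof (rule image_subsetI)
        fix x :: "real\<times>real" assume "x \<in> {x \<in> {0..1} \<times> {0..1}. 1/2 \<le> snd x}"
        then have h: "0 \<le> 2-2 * snd x" "2-2 * snd x \<le> 1" "0 \<le> 1 - fst x" "1 - fst x \<le> 1" by auto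
        have "(2-2 * snd x)*(1-fst x) \<le> 1 * 1" using h by (intro mult_mono) auto
        moreover have "0 \<le> (2-2 * snd x)*(1-fst x)" using h by simp
        ultimately show "(2 - 2 * snd x) * (1 - fst x) \<in> {0..1}" by simp
      qed
    qed (auto intro!: continuous_intros)
    show "p (2 * snd x * (1 - fst x)) = p ((2 - 2 * snd x) * (1 - fst x))" if "x \<in> {0..1} \<times> {0..1}" "snd x = 1/2" for x
    proof -
      have e: "2 * snd x = 1" using that(2) by simp
      show ?thesis unfolding e by simp
    qed
  qed (auto intro!: continuous_intros)
  show "?H (0, t) = jn p (rv p) t" if "t \<in> {0..1}" for t by (simp add: jn_def rv_def)
  show "?H (1, t) = p 0" if "t \<in> {0..1}" for t by simp
  show "?H (s, 0) = jn p (rv p) 0 \<and> ?H (s, 1) = jn p (rv p) 1" if "s \<in> {0..1}" for s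
    by (simp add: jn_def rv_def)
qed

lemma jn_0 [simp]: "jn p q 0 = p 0" and jn_1 [simp]: "jn p q 1 = q 1"
  by (simp_all add: jn_def)

lemma rv_0 [simp]: "rv p 0 = p 1" and rv_1 [simp]: "rv p 1 = p 0"
  by (simp_all add: rv_def)

lemma jn_le: "t \<le> 1/2 \<Longrightarrow> jn p q t = p (2*t)" by (simp add: jn_def)
lemma jn_gt: "\<not> t \<le> 1/2 \<Longrightarrow> jn p q t = q (2*t-1)" by (simp add: jn_def)

lemma ph_assoc:
  assumes "pth X p" "pth X q" "pth X r" "p 1 = q 0" "q 1 = r 0"
  shows "path_homotopic X (jn (jn p q) r) (jn p (jn q r))"
proof (rule ph_reparam[where u="\<lambda>t. min (2 * t) (min (t + 1/4) ((t+1)/2))" and v=id])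
  show "pth X (jn p (jn q r))" using assms by (intro pth_jn) auto
  show "continuous_on {0..1} (\<lambda>t::real. min (2 * t) (min (t + 1/4) ((t+1)/2)))"
    by (auto intro!: continuous_intros)
  show "(\<lambda>t::real. min (2 * t) (min (t + 1/4) ((t+1)/2))) ` {0..1} \<subseteq> {0..1}"
    by (auto simp: min_le_iff_disj)
  show "jn (jn p q) r t = jn p (jn q r) (min (2 * t) (min (t + 1/4) ((t+1)/2)))" if "t \<in> {0..1}" for t
  proof -
    consider "t \<le> 1/4" | "1/4 < t" "t \<le> 1/2" | "1/2 < t" by linarith
    then show ?thesis
    proof cases
      case 1
      then have e: "min (2 * t) (min (t + 1/4) ((t+1)/2)) = 2 * t" by (simp add: min_def)
      have "t \<le> 1/2" "2 * t \<le> 1/2" "2*(2 * t) \<le> 1/2 \<or> True" using 1 by auto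
      then show ?thesis unfolding e by (simp add: jn_def)
    next
      case 2
      then have e: "min (2 * t) (min (t + 1/4) ((t+1)/2)) = t + 1/4" by (simp add: min_def)
      have a: "t \<le> 1/2" "\<not> 2 * t \<le> 1/2" "\<not> t + 1/4 \<le> 1/2" "2 * (t + 1/4) - 1 \<le> 1/2" using 2 by auto
      have b: "2 * (2 * (t + 1/4) - 1) = 2 * (2 * t) - 1" by (simp add: algebra_simps)
      show ?thesis unfolding e jn_def using a b by simp
    next
      case 3
      then have e: "min (2 * t) (min (t + 1/4) ((t+1)/2)) = (t+1)/2" by (simp add: min_def)
      have "jn p (jn q r) ((t+1)/2) = jn q r (2*((t+1)/2)-1)" by (rule jn_gt) (use 3 in simp)
      also have "2*((t+1)/2)-1 = t" by (simp add: field_simps)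
      also have "jn q r t = r(2*t-1)" by (rule jn_gt) (use 3 in simp)
      also have "r(2*t-1) = jn (jn p q) r t" by (rule jn_gt[symmetric]) (use 3 in simp)
      finally show ?thesis unfolding e by simp
    qed
  qed
qed auto

lemma ph_lid:
  assumes "pth X p"
  shows "path_homotopic X (jn (\<lambda>t. p 0) p) p"
proof (rule ph_reparam[where u="\<lambda>t. max 0 (2 * t - 1)" and v=id])
  show "continuous_on {0..1} (\<lambda>t::real. max 0 (2 * t - 1))" by (intro continuous_intros)
  show "(\<lambda>t::real. max 0 (2 * t - 1)) ` {0..1} \<subseteq> {0..1}" by auto
  show "jn (\<lambda>t. p 0) p t = p (max 0 (2 * t - 1))" if "t \<in> {0..1}" for t
  proof (cases "t \<le> 1/2")
    case True
    then have "max 0 (2 * t-1) = 0" by auto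
    then show ?thesis using True by (simp add: jn_def)
  next
    case False
    then have "max 0 (2 * t-1) = 2 * t-1" by auto
    then show ?thesis using False by (simp add: jn_def)
  qed
qed (use assms in auto)

lemma ph_rid:
  assumes "pth X p"
  shows "path_homotopic X (jn p (\<lambda>t. p 1)) p"
proof (rule ph_reparam[where u="\<lambda>t. min 1 (2 * t)" and v=id])
  show "continuous_on {0..1} (\<lambda>t::real. min 1 (2 * t))" by (intro continuous_intros)
  show "(\<lambda>t::real. min 1 (2 * t)) ` {0..1} \<subseteq> {0..1}" by auto
  show "jn p (\<lambda>t. p 1) t = p (min 1 (2 * t))" if "t \<in> {0..1}" for t
  proof (cases "t \<le> 1/2")
    case True
    then have "min 1 (2 * t) = 2 * t" by auto
    then show ?thesis using True by (simp add: jn_def)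
  next
    case False
    then have "min 1 (2 * t) = 1" by auto
    then show ?thesis using False by (simp add: jn_def)
  qed
qed (use assms in auto)

lemma mult_unit_bound: "0 \<le> x \<Longrightarrow> x \<le> 1 \<Longrightarrow> 0 \<le> (d::real) \<Longrightarrow> 0 \<le> d * x \<and> d * x \<le> d"
  using mult_left_mono[of x 1 d] by simp

lemma ph_sbjn:
  assumes p: "pth X p" and abc: "0 \<le> a" "a \<le> b" "b \<le> c" "c \<le> 1"
  shows "path_homotopic X (jn (sb p a b) (sb p b c)) (sb p a c)"
proof (rule ph_reparam[where u="\<lambda>t. a + (b-a) * min (2 * t) 1 + (c-b) * max 0 (2 * t-1)" and v="\<lambda>t. a + (c-a)*t"])
  show "continuous_on {0..1} (\<lambda>t::real. a + (b-a) * min (2 * t) 1 + (c-b) * max 0 (2 * t-1))"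
    by (intro continuous_intros)
  show "continuous_on {0..1} (\<lambda>t::real. a + (c-a)*t)" by (intro continuous_intros)
  show "(\<lambda>t::real. a + (b-a) * min (2 * t) 1 + (c-b) * max 0 (2 * t-1)) ` {0..1} \<subseteq> {0..1}"
  proof clarify
    fix t :: real assume t: "t \<in> {0..1}"
    have 1: "0 \<le> (b-a) * min (2 * t) 1 \<and> (b-a) * min (2 * t) 1 \<le> b - a"
      using t abc by (intro mult_unit_bound) auto
    have 2: "0 \<le> (c-b) * max 0 (2 * t-1) \<and> (c-b) * max 0 (2 * t-1) \<le> c - b"
      using t abc by (intro mult_unit_bound) auto
    show "a + (b-a) * min (2 * t) 1 + (c-b) * max 0 (2 * t-1) \<in> {0..1}"
      using 1 2 abc by auto
  qed
  show "(\<lambda>t::real. a + (c-a)*t) ` {0..1} \<subseteq> {0..1}"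
  proof clarify
    fix t :: real assume t: "t \<in> {0..1}"
    have 1: "0 \<le> (c-a) * t \<and> (c-a) * t \<le> c - a"
      using t abc by (intro mult_unit_bound) auto
    show "a + (c-a)*t \<in> {0..1}" using 1 abc by auto
  qed
  show "jn (sb p a b) (sb p b c) t = p (a + (b-a) * min (2 * t) 1 + (c-b) * max 0 (2 * t-1))"
    if "t \<in> {0..1}" for t
  proof (cases "t \<le> 1/2")
    case True
    then have "min (2 * t) 1 = 2 * t" "max 0 (2 * t-1) = 0" by auto
    then show ?thesis using True by (simp add: jn_def sb_def)
  next
    case False
    then have "min (2 * t) 1 = 1" "max 0 (2 * t-1) = 2 * t-1" by auto
    then show ?thesis using False by (simp add: jn_def sb_def algebra_simps)
  qed
  show "sb p a c t = p (a + (c-a)*t)" for t by (simp add: sb_def)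
qed (use p in auto)

declare ph_trans[trans]

lemma ph_cancel2:
  assumes "pth X p"
  shows "path_homotopic X (jn (rv p) p) (\<lambda>t. p 1)"
proof -
  have "path_homotopic X (jn (rv p) p) (jn (rv p) (rv (rv p)))"
  proof (rule ph_jn)
    show "path_homotopic X (rv p) (rv p)" by (rule ph_refl[OF pth_rv[OF assms]])
    show "path_homotopic X p (rv (rv p))" by (rule ph_eqI[OF assms]) (auto simp: rv_def)
  qed simp
  moreover have "path_homotopic X (jn (rv p) (rv (rv p))) (\<lambda>t. rv p 0)"
    by (rule ph_cancel) (rule pth_rv[OF assms])
  ultimately show ?thesis using ph_trans by fastforce
qed

lemma pth_const: "x \<in> topspace X \<Longrightarrow> pth X (\<lambda>t. x)"
  by (simp add: pth_def)

lemma pth_in: "pth X p \<Longrightarrow> t \<in> {0..1} \<Longrightarrow> p t \<in> topspace X"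
  unfolding pth_def using continuous_map_image_subset_topspace by fastforce

lemma ph_ri:
  assumes V: "relatively_inessential X V" and p: "pth X p" and q: "pth X q"
    and pV: "\<And>t. t \<in> {0..1} \<Longrightarrow> p t \<in> V" and qV: "\<And>t. t \<in> {0..1} \<Longrightarrow> q t \<in> V"
    and e0: "p 0 = q 0" and e1: "p 1 = q 1"
  shows "path_homotopic X p q"
proof -
  let ?l = "jn p (rv q)"
  have lp: "pth X ?l" using p q e1 by (intro pth_jn pth_rv) auto
  have lV: "continuous_map unit_interval (subtopology X V) ?l"
  proof (rule continuous_map_into_subtopology)
    show "continuous_map unit_interval X ?l" using lp by (simp add: pth_def)
    show "?l \<in> topspace unit_interval \<rightarrow> V"
      using pV qV by (auto simp: jn_def rv_def)
  qed
  have x: "p 0 \<in> V" using pV by auto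
  have "homotopic_with (\<lambda>k. k 0 = p 0 \<and> k 1 = p 0) unit_interval X ?l (\<lambda>t. p 0)"
    using V x lV e0 unfolding relatively_inessential_def by auto
  then have l0: "path_homotopic X ?l (\<lambda>t. p 0)"
    unfolding path_homotopic_def using e0 by simp
  have c1: "p 1 \<in> topspace X" using pth_in[OF p] by auto
  have "path_homotopic X p (jn p (\<lambda>t. p 1))" by (rule ph_sym[OF ph_rid[OF p]])
  also have "path_homotopic X (jn p (\<lambda>t. p 1)) (jn p (jn (rv q) q))"
    by (rule ph_jn[OF ph_refl[OF p]]) (use ph_cancel2[OF q] e1 in \<open>auto intro: ph_sym\<close>)
  also have "path_homotopic X (jn p (jn (rv q) q)) (jn (jn p (rv q)) q)"
    by (rule ph_sym, rule ph_assoc) (use p q e0 e1 pth_rv in auto)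
  also have "path_homotopic X (jn (jn p (rv q)) q) (jn (\<lambda>t. p 0) q)"
    by (rule ph_jn[OF l0 ph_refl[OF q]]) simp
  also have "path_homotopic X (jn (\<lambda>t. p 0) q) q"
    using ph_lid[OF q] e0 by simp
  finally show ?thesis .
qed

lemma sb_0 [simp]: "sb p a b 0 = p a" and sb_1 [simp]: "sb p a b 1 = p b"
  by (simp_all add: sb_def)

lemma path_space_pth: "g \<in> path_space X \<Longrightarrow> pth X g"
  by (simp add: path_space_def pth_def)

abbreviation SB :: "'a topology \<Rightarrow> (real \<Rightarrow> 'a) set set" where
  "SB X \<equiv> {{g \<in> path_space X. g ` K \<subseteq> U} | K U. K \<subseteq> {0..1} \<and> compact K \<and> openin X U}"

lemma topspace_CO: "topspace (compact_open_paths X) = path_space X"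
proof -
  have "path_space X \<in> SB X"
    by (rule CollectI, rule exI[of _ "{}"], rule exI[of _ "{}"]) auto
  moreover have "\<Union>(SB X) \<subseteq> path_space X" by blast
  ultimately show ?thesis unfolding compact_open_paths_def topology_generated_by_topspace by blast
qed

lemma CO_sub_open:
  "K \<subseteq> {0..1} \<Longrightarrow> compact K \<Longrightarrow> openin X U \<Longrightarrow> openin (compact_open_paths X) {g \<in> path_space X. g ` K \<subseteq> U}"
  unfolding compact_open_paths_def by (rule topology_generated_by_Basis) blast

lemma CO_nbhd_gen:
  assumes "generate_topology_on (SB X) N" "g \<in> N"
  shows "\<exists>F. finite F \<and> (\<forall>(K,U)\<in>F. K \<subseteq> {0..1} \<and> compact K \<and> openin X U \<and> g ` K \<subseteq> U) \<and>
     {f \<in> path_space X. \<forall>(K,U)\<in>F. f ` K \<subseteq> U} \<subseteq> N"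
  using assms
proof (induction arbitrary: g rule: generate_topology_on.induct)
  case Empty
  then show ?case by simp
next
  case (Int a b)
  from Int.prems have ga: "g \<in> a" and gb: "g \<in> b" by auto
  obtain F1 where F1: "finite F1" "\<forall>(K,U)\<in>F1. K \<subseteq> {0..1} \<and> compact K \<and> openin X U \<and> g ` K \<subseteq> U"
     "{f \<in> path_space X. \<forall>(K,U)\<in>F1. f ` K \<subseteq> U} \<subseteq> a"
    using Int.IH(1)[OF ga] by blast
  obtain F2 where F2: "finite F2" "\<forall>(K,U)\<in>F2. K \<subseteq> {0..1} \<and> compact K \<and> openin X U \<and> g ` K \<subseteq> U"
     "{f \<in> path_space X. \<forall>(K,U)\<in>F2. f ` K \<subseteq> U} \<subseteq> b"
    using Int.IH(2)[OF gb] by blast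
  have s1: "{f \<in> path_space X. \<forall>(K,U)\<in>F1 \<union> F2. f ` K \<subseteq> U} \<subseteq> {f \<in> path_space X. \<forall>(K,U)\<in>F1. f ` K \<subseteq> U}"
    by blast
  have s2: "{f \<in> path_space X. \<forall>(K,U)\<in>F1 \<union> F2. f ` K \<subseteq> U} \<subseteq> {f \<in> path_space X. \<forall>(K,U)\<in>F2. f ` K \<subseteq> U}"
    by blast
  have f1: "finite (F1 \<union> F2)" using F1 F2 by simp
  have f2: "\<forall>(K,U)\<in>F1 \<union> F2. K \<subseteq> {0..1} \<and> compact K \<and> openin X U \<and> g ` K \<subseteq> U"
    using F1(2) F2(2) by blast
  have f3: "{f \<in> path_space X. \<forall>(K,U)\<in>F1 \<union> F2. f ` K \<subseteq> U} \<subseteq> a \<inter> b"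
    by (intro Int_greatest order_trans[OF s1 F1(3)] order_trans[OF s2 F2(3)])
  show ?case by (intro exI[where x="F1 \<union> F2"] conjI f1 f2 f3)
next
  case (UN K)
  then obtain k where k: "k \<in> K" "g \<in> k" by blast
  obtain F where F: "finite F" "\<forall>(K,U)\<in>F. K \<subseteq> {0..1} \<and> compact K \<and> openin X U \<and> g ` K \<subseteq> U"
     "{f \<in> path_space X. \<forall>(K,U)\<in>F. f ` K \<subseteq> U} \<subseteq> k"
    using UN.IH[OF k] by blast
  have "k \<subseteq> \<Union>K" using k by blast
  show ?case by (intro exI[where x=F] conjI F(1) F(2) order_trans[OF F(3) \<open>k \<subseteq> \<Union>K\<close>])
next
  case (Basis s)
  then obtain K U where KU: "s = {g \<in> path_space X. g ` K \<subseteq> U}" "K \<subseteq> {0..1}" "compact K" "openin X U"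
    by blast
  have gs: "g ` K \<subseteq> U" using Basis.prems KU(1) by blast
  have f2: "\<forall>(K',U')\<in>{(K,U)}. K' \<subseteq> {0..1} \<and> compact K' \<and> openin X U' \<and> g ` K' \<subseteq> U'"
    using KU gs by simp
  have f3: "{f \<in> path_space X. \<forall>(K',U')\<in>{(K,U)}. f ` K' \<subseteq> U'} \<subseteq> s"
    using KU(1) by simp
  show ?case by (intro exI[where x="{(K,U)}"] conjI f2 f3) simp
qed

lemma CO_nbhd:
  assumes "openin (compact_open_paths X) N" "g \<in> N"
  obtains F where "finite F" "\<And>K U. (K,U)\<in>F \<Longrightarrow> K \<subseteq> {0..1} \<and> compact K \<and> openin X U \<and> g ` K \<subseteq> U"
     "{f \<in> path_space X. \<forall>(K,U)\<in>F. f ` K \<subseteq> U} \<subseteq> N"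
  using CO_nbhd_gen[of X N g] assms unfolding compact_open_paths_def openin_topology_generated_by_iff
  by fast

lemma ev_small: "(\<exists>b>0. \<forall>y. 0 < y \<longrightarrow> y < b \<longrightarrow> P y) \<Longrightarrow> eventually P (at_right (0::real))"
  by (auto simp: eventually_at_right_field)

lemma near0:
  assumes g: "pth X g" and A: "openin X A" "g 0 \<in> A"
  shows "eventually (\<lambda>e. \<forall>t\<in>{0..e}. g t \<in> A) (at_right (0::real))"
proof -
  have o: "openin (top_of_set {0..1}) {t \<in> {0..1::real}. g t \<in> A}"
    using openin_continuous_map_preimage[OF g[unfolded pth_def] A(1)] by simp
  have "0 \<in> {t \<in> {0..1::real}. g t \<in> A}" using A by simp
  then obtain e where e: "e > 0" "\<And>x'. x' \<in> {0..1} \<Longrightarrow> dist x' 0 < e \<Longrightarrow> x' \<in> {t \<in> {0..1::real}. g t \<in> A}"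
    using o unfolding openin_euclidean_subtopology_iff by blast
  show ?thesis
  proof (rule ev_small, intro exI[of _ "min e 1"] conjI allI impI ballI)
    fix y t :: real assume "0 < y" "y < min e 1" "t \<in> {0..y}"
    then show "g t \<in> A" using e(2)[of t] by (auto simp: dist_real_def)
  qed (use e in auto)
qed

lemma near1:
  assumes g: "pth X g" and A: "openin X A" "g 1 \<in> A"
  shows "eventually (\<lambda>e. \<forall>t\<in>{1-e..1}. g t \<in> A) (at_right (0::real))"
proof -
  have o: "openin (top_of_set {0..1}) {t \<in> {0..1::real}. g t \<in> A}"
    using openin_continuous_map_preimage[OF g[unfolded pth_def] A(1)] by simp
  have "1 \<in> {t \<in> {0..1::real}. g t \<in> A}" using A by simp
  then obtain e where e: "e > 0" "\<And>x'. x' \<in> {0..1} \<Longrightarrow> dist x' 1 < e \<Longrightarrow> x' \<in> {t \<in> {0..1::real}. g t \<in> A}"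
    using o unfolding openin_euclidean_subtopology_iff by blast
  show ?thesis
  proof (rule ev_small, intro exI[of _ "min e 1"] conjI allI impI ballI)
    fix y t :: real assume "0 < y" "y < min e 1" "t \<in> {1-y..1}"
    then show "g t \<in> A" using e(2)[of t] by (auto simp: dist_real_def)
  qed (use e in auto)
qed

lemma avoid_pt:
  assumes "compact K" "(c::real) \<notin> K"
  shows "\<exists>e>0. \<forall>t. dist t c < e \<longrightarrow> t \<notin> K"
proof -
  have "open (- K)" using assms compact_imp_closed by blast
  then obtain e where e: "e > 0" "ball c e \<subseteq> - K" using assms(2) open_contains_ball by blast
  have "\<forall>t. dist t c < e \<longrightarrow> t \<notin> K"
  proof (intro allI impI)
    fix t assume "dist t c < e"
    then have "t \<in> ball c e" by (simp add: dist_commute)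
    then show "t \<notin> K" using e(2) by blast
  qed
  then show ?thesis using e(1) by blast
qed

lemma avoid0:
  assumes "compact K" "(0::real) \<notin> K"
  shows "eventually (\<lambda>e. K \<inter> {0..e} = {}) (at_right (0::real))"
proof -
  obtain e where e: "e > 0" "\<And>t. dist t 0 < e \<Longrightarrow> t \<notin> K" using avoid_pt[OF assms] by blast
  show ?thesis
  proof (rule ev_small, intro exI[of _ e] conjI allI impI)
    fix y assume "0 < y" "y < e"
    then show "K \<inter> {0..y} = {}" using e(2) by (force simp: dist_real_def)
  qed (use e in auto)
qed

lemma avoid1:
  assumes "compact K" "(1::real) \<notin> K"
  shows "eventually (\<lambda>e. K \<inter> {1-e..1} = {}) (at_right (0::real))"
proof -
  obtain e where e: "e > 0" "\<And>t. dist t 1 < e \<Longrightarrow> t \<notin> K" using avoid_pt[OF assms] by blast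
  show ?thesis
  proof (rule ev_small, intro exI[of _ e] conjI allI impI)
    fix y assume "0 < y" "y < e"
    then show "K \<inter> {1-y..1} = {}" using e(2) by (force simp: dist_real_def)
  qed (use e in auto)
qed

lemma L2:
  assumes g: "g \<in> path_space X" and N: "openin (compact_open_paths X) N" "g \<in> N"
  obtains A B where "openin X A" "g 0 \<in> A" "openin X B" "g 1 \<in> B"
    "\<And>al be. pth X al \<Longrightarrow> pth X be \<Longrightarrow> (\<And>t. t \<in> {0..1} \<Longrightarrow> al t \<in> A) \<Longrightarrow>
        (\<And>t. t \<in> {0..1} \<Longrightarrow> be t \<in> B) \<Longrightarrow> al 1 = g 0 \<Longrightarrow> be 0 = g 1 \<Longrightarrow>
        \<exists>g'\<in>N. path_homotopic X g' (jn (jn al g) be)"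
proof -
  have pg: "pth X g" using g by (rule path_space_pth)
  obtain F where F: "finite F" "\<And>K U. (K,U)\<in>F \<Longrightarrow> K \<subseteq> {0..1} \<and> compact K \<and> openin X U \<and> g ` K \<subseteq> U"
     "{f \<in> path_space X. \<forall>(K,U)\<in>F. f ` K \<subseteq> U} \<subseteq> N" by (rule CO_nbhd[OF N], blast)
  define A where "A = topspace X \<inter> \<Inter>(snd ` {KU \<in> F. 0 \<in> fst KU})"
  define B where "B = topspace X \<inter> \<Inter>(snd ` {KU \<in> F. 1 \<in> fst KU})"
  have oA: "openin X A" unfolding A_def
  proof (rule openin_Int_Inter)
    show "finite (snd ` {KU \<in> F. 0 \<in> fst KU})" using F(1) by simp
    show "openin X U'" if "U' \<in> snd ` {KU \<in> F. 0 \<in> fst KU}" for U' using that F(2) by force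
  qed simp
  have oB: "openin X B" unfolding B_def
  proof (rule openin_Int_Inter)
    show "finite (snd ` {KU \<in> F. 1 \<in> fst KU})" using F(1) by simp
    show "openin X U'" if "U' \<in> snd ` {KU \<in> F. 1 \<in> fst KU}" for U' using that F(2) by force
  qed simp
  have A0: "g 0 \<in> A" unfolding A_def using pth_in[OF pg, of 0] F(2) by force
  have B1: "g 1 \<in> B" unfolding B_def using pth_in[OF pg, of 1] F(2) by force
  have AU: "A \<subseteq> U" if "(K,U) \<in> F" "0 \<in> K" for K U unfolding A_def using that by force
  have BU: "B \<subseteq> U" if "(K,U) \<in> F" "1 \<in> K" for K U unfolding B_def using that by force
  define Q where "Q = (\<lambda>e::real. e < 1/4 \<and> (\<forall>KU\<in>F. 0 \<notin> fst KU \<longrightarrow> fst KU \<inter> {0..e} = {}) \<and>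
     (\<forall>KU\<in>F. 1 \<notin> fst KU \<longrightarrow> fst KU \<inter> {1-e..1} = {}) \<and> (\<forall>t\<in>{0..e}. g t \<in> A) \<and> (\<forall>t\<in>{1-e..1}. g t \<in> B))"
  have ev: "eventually Q (at_right 0)"
    unfolding Q_def
  proof (intro eventually_conj)
    show "eventually (\<lambda>e. e < 1/4) (at_right (0::real))" by (rule ev_small) (auto intro!: exI[of _ "1/4"])
    show "eventually (\<lambda>e. \<forall>KU\<in>F. 0 \<notin> fst KU \<longrightarrow> fst KU \<inter> {0..e} = {}) (at_right (0::real))"
    proof (rule eventually_ball_finite[OF F(1)], rule ballI)
      fix KU assume "KU \<in> F"
      then obtain K U where KU: "KU = (K,U)" "(K,U) \<in> F" by (cases KU) auto
      show "eventually (\<lambda>e. 0 \<notin> fst KU \<longrightarrow> fst KU \<inter> {0..e} = {}) (at_right (0::real))"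
      proof (cases "0 \<in> K")
        case True then show ?thesis using KU by simp
      next
        case False
        have "eventually (\<lambda>e. K \<inter> {0..e} = {}) (at_right (0::real))"
          using avoid0[OF _ False] F(2)[OF KU(2)] by blast
        then show ?thesis using KU by (auto elim: eventually_mono)
      qed
    qed
    show "eventually (\<lambda>e. \<forall>KU\<in>F. 1 \<notin> fst KU \<longrightarrow> fst KU \<inter> {1-e..1} = {}) (at_right (0::real))"
    proof (rule eventually_ball_finite[OF F(1)], rule ballI)
      fix KU assume "KU \<in> F"
      then obtain K U where KU: "KU = (K,U)" "(K,U) \<in> F" by (cases KU) auto
      show "eventually (\<lambda>e. 1 \<notin> fst KU \<longrightarrow> fst KU \<inter> {1-e..1} = {}) (at_right (0::real))"
      proof (cases "1 \<in> K")
        case True then show ?thesis using KU by simp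
      next
        case False
        have "eventually (\<lambda>e. K \<inter> {1-e..1} = {}) (at_right (0::real))"
          using avoid1[OF _ False] F(2)[OF KU(2)] by blast
        then show ?thesis using KU by (auto elim: eventually_mono)
      qed
    qed
    show "eventually (\<lambda>e. \<forall>t\<in>{0..e}. g t \<in> A) (at_right (0::real))" by (rule near0[OF pg oA A0])
    show "eventually (\<lambda>e. \<forall>t\<in>{1-e..1}. g t \<in> B) (at_right (0::real))" by (rule near1[OF pg oB B1])
  qed
  then obtain b where b: "b > 0" "\<And>y. 0 < y \<Longrightarrow> y < b \<Longrightarrow> Q y"
    by (auto simp: eventually_at_right_field)
  define e where "e = b / 2"
  have e0: "0 < e" using b by (simp add: e_def)
  have "Q e" using b by (intro b(2)) (auto simp: e_def)
  then have e14: "e < 1/4"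
    and eK0: "\<And>K U. (K,U) \<in> F \<Longrightarrow> 0 \<notin> K \<Longrightarrow> K \<inter> {0..e} = {}"
    and eK1: "\<And>K U. (K,U) \<in> F \<Longrightarrow> 1 \<notin> K \<Longrightarrow> K \<inter> {1-e..1} = {}"
    and gA: "\<And>t. t \<in> {0..e} \<Longrightarrow> g t \<in> A"
    and gB: "\<And>t. t \<in> {1-e..1} \<Longrightarrow> g t \<in> B"
    unfolding Q_def by force+
  define k1 where "k1 = (1+e)/(4*e)"
  define k3 where "k3 = (2+e)/(4*e)"
  have k1a: "k1 - 1/4 = 1/(4*e)" using e0 by (simp add: k1_def field_simps)
  have k3a: "k3 - 1/4 = 1/(2*e)" using e0 by (simp add: k3_def field_simps)
  have k1p: "k1 - 1/4 > 0" using k1a e0 by simp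
  have k3p: "k3 - 1/4 > 0" using k3a e0 by simp
  have k1e: "(k1 - 1/4) * e = 1/4" using k1a e0 by simp
  have k3e: "(k3 - 1/4) * e = 1/2" using k3a e0 by simp
  have k3ge: "1 \<le> k3"
  proof -
    have "(k3 - 1/4) * e \<le> (k3 - 1/4) * (1/4)" using e14 k3p by (intro mult_left_mono) auto
    then have "1/2 \<le> (k3 - 1/4) * (1/4)" using k3e by simp
    then show ?thesis by simp
  qed
  have fa: "1/4 + t/4 \<le> k1*t" if "e \<le> t" for t
  proof -
    have "(k1 - 1/4) * e \<le> (k1 - 1/4) * t" using that k1p by (intro mult_left_mono) auto
    then have "1/4 \<le> (k1 - 1/4) * t" using k1e by simp
    then show ?thesis by (simp add: algebra_simps)
  qed
  have fb: "1 - k3*(1-t) \<le> 1/4 + t/4" if "e \<le> 1 - t" for t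
  proof -
    have "(k3 - 1/4) * e \<le> (k3 - 1/4) * (1-t)" using that k3p by (intro mult_left_mono) auto
    then have "1/2 \<le> (k3 - 1/4) * (1-t)" using k3e by simp
    moreover have "(k3 - 1/4) * (1-t) = k3 - k3*t - 1/4 + t/4" by (simp add: field_simps)
    moreover have "k3*(1-t) = k3 - k3*t" by (simp add: algebra_simps)
    ultimately show ?thesis by linarith
  qed
  have fc: "k1*t \<le> 1/4 + e/4" if "t \<le> e" for t
  proof -
    have "(k1 - 1/4) * t \<le> (k1 - 1/4) * e" using that k1p by (intro mult_left_mono) auto
    then have "(k1 - 1/4) * t \<le> 1/4" using k1e by simp
    then have "k1 * t \<le> 1/4 + t/4" by (simp add: algebra_simps)
    then show ?thesis using that by simp
  qed
  have fd: "0 \<le> k3*(1-t)" if "t \<le> 1" for t using k3ge that by simp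
  have fk1: "0 \<le> k1*t" if "0 \<le> t" for t using k1p that by simp
  define ph where "ph = (\<lambda>t::real. max (min (k1*t) (1/4 + t/4)) (1 - k3*(1-t)))"
  have ph_mid: "ph t = 1/4 + t/4" if "e \<le> t" "t \<le> 1 - e" for t
    unfolding ph_def using fa[of t] fb[of t] that by (simp add: min_absorb2 max_absorb1)
  have ph_lo: "0 \<le> ph t \<and> ph t \<le> 1/4 + e/4" if "0 \<le> t" "t \<le> e" for t
  proof -
    have "1 - k3*(1-t) \<le> 1/4 + t/4" using fb[of t] that e14 by simp
    then show ?thesis unfolding ph_def using fc[of t] fk1[of t] that by (auto simp: min_le_iff_disj)
  qed
  have ph_hi: "1/2 - e/4 \<le> ph t \<and> ph t \<le> 1" if "1 - e \<le> t" "t \<le> 1" for t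
  proof -
    have "min (k1*t) (1/4 + t/4) = 1/4 + t/4" using fa[of t] that e14 by (simp add: min_absorb2)
    then show ?thesis unfolding ph_def using fd[of t] that by auto
  qed
  have ph_I: "ph t \<in> {0..1}" if "t \<in> {0..1}" for t
  proof -
    consider "t \<le> e" | "1 - e \<le> t" | "e \<le> t" "t \<le> 1 - e" by linarith
    then show ?thesis
    proof cases
      case 1 then show ?thesis using ph_lo[of t] that e14 by auto
    next
      case 2 then show ?thesis using ph_hi[of t] that e14 by auto
    next
      case 3 then show ?thesis using ph_mid[of t] that by auto
    qed
  qed
  have ph0: "ph 0 = 0" using k3ge unfolding ph_def by simp
  have ph1: "ph 1 = 1" unfolding ph_def by simp
  have cph: "continuous_on {0..1} ph" unfolding ph_def by (auto intro!: continuous_intros)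
  show ?thesis
  proof (rule that[OF oA A0 oB B1])
    fix al be
    assume pal: "pth X al" and pbe: "pth X be" and alA: "\<And>t. t \<in> {0..1} \<Longrightarrow> al t \<in> A"
      and beB: "\<And>t. t \<in> {0..1} \<Longrightarrow> be t \<in> B" and al1: "al 1 = g 0" and be0: "be 0 = g 1"
    define c where "c = jn (jn al g) be"
    have pc: "pth X c" unfolding c_def using pal pg pbe al1 be0 by (intro pth_jn) auto
    have cA: "c u \<in> A" if "0 \<le> u" "u \<le> 1/4 + e/4" for u
    proof -
      have u: "u \<le> 1/2" using that e14 by simp
      show ?thesis
      proof (cases "2*u \<le> 1/2")
        case True
        then have "c u = al (2*(2*u))" unfolding c_def using u by (simp add: jn_le)
        then show ?thesis using alA[of "2*(2*u)"] True that by simp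
      next
        case False
        then have "c u = g (2*(2*u)-1)" unfolding c_def using u by (simp add: jn_le jn_gt)
        then show ?thesis using gA[of "2*(2*u)-1"] False that by simp
      qed
    qed
    have cB: "c u \<in> B" if "1/2 - e/4 \<le> u" "u \<le> 1" for u
    proof (cases "u \<le> 1/2")
      case True
      have "\<not> 2*u \<le> 1/2" using that e14 by simp
      then have "c u = g (2*(2*u)-1)" unfolding c_def using True by (simp add: jn_le jn_gt)
      then show ?thesis using gB[of "2*(2*u)-1"] True that by simp
    next
      case False
      then have "c u = be (2*u-1)" unfolding c_def by (simp add: jn_gt)
      then show ?thesis using beB[of "2*u-1"] False that by simp
    qed
    have cmid: "c (1/4 + t/4) = g t" if "0 < t" "t \<le> 1" for t
    proof -
      have "c (1/4 + t/4) = jn al g (2*(1/4 + t/4))" unfolding c_def using that by (simp add: jn_le)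
      also have "\<dots> = g (2*(2*(1/4 + t/4)) - 1)" using that by (simp add: jn_gt)
      also have "2*(2*(1/4 + t/4)) - 1 = t" by (simp add: field_simps)
      finally show ?thesis .
    qed
    define g' where "g' = (\<lambda>t. if t \<in> {0..1} then c (ph t) else undefined)"
    have cg': "continuous_map (top_of_set {0..1}) X (\<lambda>t. c (ph t))"
      using pc unfolding pth_def by (rule cm_comp[OF _ cph]) (use ph_I in auto)
    have g'P: "g' \<in> path_space X"
      unfolding path_space_def
    proof (intro CollectI conjI)
      show "continuous_map unit_interval X g'"
        by (rule continuous_map_eq[OF cg']) (simp add: g'_def)
      show "g' \<in> extensional {0..1}" by (simp add: g'_def extensional_def)
    qed
    have "g' \<in> {f \<in> path_space X. \<forall>(K,U)\<in>F. f ` K \<subseteq> U}"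
    proof (intro CollectI conjI g'P ballI, clarify)
      fix K U t assume KU: "(K,U) \<in> F" and t: "t \<in> K"
      have tI: "t \<in> {0..1}" using F(2)[OF KU] t by auto
      have g't: "g' t = c (ph t)" using tI by (simp add: g'_def)
      consider "t < e" | "1 - e < t" | "e \<le> t" "t \<le> 1 - e" by linarith
      then show "g' t \<in> U"
      proof cases
        case 1
        then have "0 \<in> K" using eK0[OF KU] t tI by force
        then have "A \<subseteq> U" by (rule AU[OF KU])
        moreover have "c (ph t) \<in> A" using cA ph_lo[of t] 1 tI by auto
        ultimately show ?thesis using g't by auto
      next
        case 2
        then have "1 \<in> K" using eK1[OF KU] t tI by force
        then have "B \<subseteq> U" by (rule BU[OF KU])
        moreover have "c (ph t) \<in> B" using cB ph_hi[of t] 2 tI by auto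
        ultimately show ?thesis using g't by auto
      next
        case 3
        then have "g' t = g t" using g't ph_mid[of t] cmid[of t] e0 by simp
        then show ?thesis using F(2)[OF KU] t by auto
      qed
    qed
    then have "g' \<in> N" using F(3) by blast
    moreover have "path_homotopic X g' c"
    proof (rule ph_reparam[where u=ph and v=id, OF pc cph])
      show "ph ` {0..1} \<subseteq> {0..1}" using ph_I by auto
      show "g' t = c (ph t)" if "t \<in> {0..1}" for t using that by (simp add: g'_def)
    qed (auto simp: ph0 ph1)
    ultimately show "\<exists>g'\<in>N. path_homotopic X g' (jn (jn al g) be)" unfolding c_def by blast
  qed
qed

lemma ri_mono: "relatively_inessential X V \<Longrightarrow> W \<subseteq> V \<Longrightarrow> relatively_inessential X W"
proof -
  assume V: "relatively_inessential X V" and WV: "W \<subseteq> V"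
  show ?thesis unfolding relatively_inessential_def
  proof (intro conjI ballI allI impI)
    show "W \<subseteq> topspace X" using V WV unfolding relatively_inessential_def by blast
    fix x g assume x: "x \<in> W" and g: "continuous_map unit_interval (subtopology X W) g \<and> g 0 = x \<and> g 1 = x"
    have "continuous_map unit_interval (subtopology X V) g"
      using g WV by (auto simp: continuous_map_in_subtopology)
    then show "homotopic_with (\<lambda>k. k 0 = x \<and> k 1 = x) unit_interval X g (\<lambda>t. x)"
      using V x WV g unfolding relatively_inessential_def by blast
  qed
qed

lemma good_nbhd:
  assumes lpc: "locally_path_connected_space X" and slsc: "semilocally_simply_connected X"
    and x: "x \<in> topspace X" and O: "openin X Op" "x \<in> Op"
  shows "\<exists>W. openin X W \<and> path_connectedin X W \<and> relatively_inessential X W \<and> x \<in> W \<and> W \<subseteq> Op"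
proof -
  obtain U V where UV: "openin X U" "x \<in> U" "U \<subseteq> V" "relatively_inessential X V"
    using slsc x unfolding semilocally_simply_connected_def by blast
  have "openin X (U \<inter> Op)" "x \<in> U \<inter> Op" using UV O by auto
  then obtain W where W: "openin X W" "path_connectedin X W" "x \<in> W" "W \<subseteq> U \<inter> Op"
    using lpc unfolding locally_path_connected_space by blast
  have "relatively_inessential X W" using ri_mono[OF UV(4)] W UV by blast
  then show ?thesis using W by blast
qed

lemma pc_path:
  assumes "path_connectedin X P" "x \<in> P" "y \<in> P"
  shows "\<exists>c. pth X c \<and> c 0 = x \<and> c 1 = y \<and> (\<forall>s\<in>{0..1}. c s \<in> P)"
proof -
  obtain g where g: "pathin X g" "g \<in> {0..1} \<rightarrow> P" "g 0 = x" "g 1 = y"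
    using assms unfolding path_connectedin by blast
  then show ?thesis unfolding pathin_def pth_def by (intro exI[of _ g]) auto
qed

lemma jn_inV: "(\<And>s. s \<in> {0..1} \<Longrightarrow> p s \<in> V) \<Longrightarrow> (\<And>s. s \<in> {0..1} \<Longrightarrow> q s \<in> V) \<Longrightarrow> t \<in> {0..1} \<Longrightarrow> jn p q t \<in> V"
  unfolding jn_def by auto

lemma rv_inV: "(\<And>s. s \<in> {0..1} \<Longrightarrow> p s \<in> V) \<Longrightarrow> t \<in> {0..1} \<Longrightarrow> rv p t \<in> V"
  unfolding rv_def by auto

lemma sb_inV:
  assumes "\<And>s. s \<in> {a..b} \<Longrightarrow> p s \<in> V" "a \<le> b" "t \<in> {0..1}"
  shows "sb p a b t \<in> V"
proof -
  have "0 \<le> (b-a)*t \<and> (b-a)*t \<le> b - a" using assms by (intro mult_unit_bound) auto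
  then show ?thesis unfolding sb_def using assms(1)[of "a + (b-a)*t"] by auto
qed

lemma class_eq: "path_homotopic X a b \<Longrightarrow> path_class X a = path_class X b"
  unfolding path_class_def using ph_sym ph_trans by blast

lemma L1:
  assumes lpc: "locally_path_connected_space X" and slsc: "semilocally_simply_connected X"
    and h: "h \<in> path_space X" and A: "openin X A" "h 0 \<in> A" and B: "openin X B" "h 1 \<in> B"
  obtains M where "openin (compact_open_paths X) M" "h \<in> M"
    "\<And>h'. h' \<in> M \<Longrightarrow> \<exists>al be. pth X al \<and> pth X be \<and> (\<forall>t\<in>{0..1}. al t \<in> A) \<and> (\<forall>t\<in>{0..1}. be t \<in> B)
        \<and> al 1 = h 0 \<and> be 0 = h 1 \<and> path_homotopic X h' (jn (jn al h) be)"
proof -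
  have ph: "pth X h" using h by (rule path_space_pth)
  define G where "G = {W. openin X W \<and> path_connectedin X W \<and> relatively_inessential X W}"
  define C where "C = {T. open T \<and> (\<exists>W\<in>G. \<forall>s\<in>{0..1} \<inter> T. h s \<in> W)}"
  have cover: "{0..1} \<subseteq> \<Union>C"
  proof
    fix t :: real assume t: "t \<in> {0..1}"
    have "h t \<in> topspace X" using pth_in[OF ph t] .
    then obtain W where W: "openin X W" "path_connectedin X W" "relatively_inessential X W" "h t \<in> W"
      using good_nbhd[OF lpc slsc _ openin_topspace] by blast
    have "openin (top_of_set {0..1}) {s \<in> {0..1::real}. h s \<in> W}"
      using openin_continuous_map_preimage[OF ph[unfolded pth_def] W(1)] by simp
    then obtain T where T: "open T" "{s \<in> {0..1::real}. h s \<in> W} = {0..1} \<inter> T"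
      by (auto simp: openin_open)
    have "\<forall>s\<in>{0..1} \<inter> T. h s \<in> W" using T(2) by blast
    then have "T \<in> C" unfolding C_def G_def using W T(1) by blast
    moreover have "t \<in> T" using T(2) t W(4) by blast
    ultimately show "t \<in> \<Union>C" by blast
  qed
  have Cne: "C \<noteq> {}" using cover by auto
  obtain d where d: "0 < d" "\<And>T. T \<subseteq> {0..1} \<Longrightarrow> diameter T < d \<Longrightarrow> \<exists>B\<in>C. T \<subseteq> B"
    using Lebesgue_number_lemma[OF compact_Icc Cne cover] unfolding C_def by blast
  obtain m :: nat where m: "inverse (real (Suc m)) < d" using reals_Archimedean[OF d(1)] by blast
  define n where "n = Suc m"
  have n0: "0 < n" by (simp add: n_def)
  have nd: "1 / real n < d" using m by (simp add: n_def inverse_eq_divide)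
  define t where "t = (\<lambda>i::nat. real i / real n)"
  have t0: "t 0 = 0" by (simp add: t_def)
  have tn: "t n = 1" using n0 by (simp add: t_def)
  have tmono: "t i \<le> t j" if "i \<le> j" for i j using that n0 by (simp add: t_def divide_right_mono)
  have tI: "t i \<in> {0..1}" if "i \<le> n" for i
    using that n0 tmono[of 0 i] tmono[of i n] t0 tn by auto
  have tSuc: "t (Suc i) - t i = 1 / real n" for i using n0 by (simp add: t_def field_simps)
  have "\<forall>i. \<exists>Wi. i < n \<longrightarrow> Wi \<in> G \<and> (\<forall>s\<in>{t i..t (Suc i)}. h s \<in> Wi)"
  proof (intro allI)
    fix i
    show "\<exists>Wi. i < n \<longrightarrow> Wi \<in> G \<and> (\<forall>s\<in>{t i..t (Suc i)}. h s \<in> Wi)"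
    proof (cases "i < n")
      case True
      have sub: "{t i..t (Suc i)} \<subseteq> {0..1}" using tI[of i] tI[of "Suc i"] True by auto
      have "diameter {t i..t (Suc i)} < d" using tSuc[of i] tmono[of i "Suc i"] nd by simp
      then obtain T where T: "T \<in> C" "{t i..t (Suc i)} \<subseteq> T" using d(2)[OF sub] by blast
      then obtain W where "W \<in> G" "\<forall>s\<in>{0..1} \<inter> T. h s \<in> W" unfolding C_def by blast
      then have "W \<in> G \<and> (\<forall>s\<in>{t i..t (Suc i)}. h s \<in> W)" using T(2) sub by blast
      then show ?thesis by blast
    qed simp
  qed
  then obtain W where W: "\<And>i. i < n \<Longrightarrow> W i \<in> G \<and> (\<forall>s\<in>{t i..t (Suc i)}. h s \<in> W i)"
    by metis
  have Wo: "openin X (W i)" "path_connectedin X (W i)" "relatively_inessential X (W i)" if "i < n" for i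
    using W[OF that] unfolding G_def by auto
  define Oi where "Oi = (\<lambda>i. (if i = 0 then A else W (i-1)) \<inter> (if i = n then B else W i))"
  have hO: "h (t i) \<in> Oi i" if "i \<le> n" for i
  proof -
    have 1: "h (t i) \<in> (if i = 0 then A else W (i-1))"
    proof (cases "i = 0")
      case True then show ?thesis using A t0 by simp
    next
      case False
      then have "i - 1 < n" "Suc (i - 1) = i" using that by auto
      then have "\<forall>s\<in>{t (i-1)..t i}. h s \<in> W (i-1)" using W[of "i-1"] by metis
      moreover have "t (i-1) \<le> t i" by (rule tmono) simp
      ultimately show ?thesis using False by auto
    qed
    have 2: "h (t i) \<in> (if i = n then B else W i)"
    proof (cases "i = n")
      case True then show ?thesis using B tn by simp
    next
      case False
      then have "i < n" using that by simp
      then show ?thesis using W[of i] tmono[of i "Suc i"] False by auto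
    qed
    show ?thesis using 1 2 by (simp add: Oi_def)
  qed
  have oO: "openin X (Oi i)" if "i \<le> n" for i
  proof -
    have "openin X (if i = 0 then A else W (i-1))" using A Wo(1)[of "i-1"] that by auto
    moreover have "openin X (if i = n then B else W i)" using B Wo(1)[of i] that by auto
    ultimately show ?thesis unfolding Oi_def by auto
  qed
  have "\<forall>i. \<exists>Pi. i \<le> n \<longrightarrow> openin X Pi \<and> path_connectedin X Pi \<and> h (t i) \<in> Pi \<and> Pi \<subseteq> Oi i"
  proof (intro allI)
    fix i
    show "\<exists>Pi. i \<le> n \<longrightarrow> openin X Pi \<and> path_connectedin X Pi \<and> h (t i) \<in> Pi \<and> Pi \<subseteq> Oi i"
    proof (cases "i \<le> n")
      case True
      then show ?thesis using lpc oO[OF True] hO[OF True] unfolding locally_path_connected_space by blast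
    qed simp
  qed
  then obtain P where P: "\<And>i. i \<le> n \<Longrightarrow> openin X (P i) \<and> path_connectedin X (P i) \<and> h (t i) \<in> P i \<and> P i \<subseteq> Oi i"
    by metis
  have PW: "P i \<subseteq> W i" if "i < n" for i using P[of i] that unfolding Oi_def by auto
  have PW': "P i \<subseteq> W (i-1)" if "0 < i" "i \<le> n" for i using P[of i] that unfolding Oi_def by auto
  have PA: "P 0 \<subseteq> A" using P[of 0] n0 unfolding Oi_def by auto
  have PB: "P n \<subseteq> B" using P[of n] n0 unfolding Oi_def by auto
  define S1 where "S1 = (\<lambda>i. {f \<in> path_space X. f ` {t i..t (Suc i)} \<subseteq> W i}) ` {..<n}"
  define S2 where "S2 = (\<lambda>i. {f \<in> path_space X. f ` {t i} \<subseteq> P i}) ` {..n}"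
  define M where "M = topspace (compact_open_paths X) \<inter> \<Inter>(S1 \<union> S2)"
  have Meq: "M = topspace (compact_open_paths X) \<inter> \<Inter>(S1 \<union> S2)" by (simp add: M_def)
  have SZ: "(\<exists>i. i < n \<and> Z = {f \<in> path_space X. f ` {t i..t (Suc i)} \<subseteq> W i}) \<or>
     (\<exists>i. i \<le> n \<and> Z = {f \<in> path_space X. f ` {t i} \<subseteq> P i})" if "Z \<in> S1 \<union> S2" for Z
    using that
  proof (elim UnE)
    assume "Z \<in> S1"
    then obtain i where "Z = {f \<in> path_space X. f ` {t i..t (Suc i)} \<subseteq> W i}" "i \<in> {..<n}"
      unfolding S1_def by (rule imageE)
    then show ?thesis by auto
  next
    assume "Z \<in> S2"
    then obtain i where "Z = {f \<in> path_space X. f ` {t i} \<subseteq> P i}" "i \<in> {..n}"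
      unfolding S2_def by (rule imageE)
    then show ?thesis by auto
  qed
  have oM: "openin (compact_open_paths X) M"
    unfolding Meq
  proof (rule openin_Int_Inter)
    show "finite (S1 \<union> S2)" unfolding S1_def S2_def by simp
    show "openin (compact_open_paths X) Z" if Zin: "Z \<in> S1 \<union> S2" for Z
    proof -
      consider i where "i < n" "Z = {f \<in> path_space X. f ` {t i..t (Suc i)} \<subseteq> W i}"
        | i where "i \<le> n" "Z = {f \<in> path_space X. f ` {t i} \<subseteq> P i}"
        using SZ[OF Zin] by blast
      then show ?thesis
      proof cases
        case 1
        then show ?thesis using CO_sub_open[of "{t i..t (Suc i)}" X "W i"] tI[of i] tI[of "Suc i"] Wo(1)[of i]
          by auto
      next
        case 2
        then show ?thesis using CO_sub_open[of "{t i}" X "P i"] tI[of i] P[of i] by auto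
      qed
    qed
  qed simp
  have hM: "h \<in> M" unfolding M_def
  proof (intro IntI InterI)
    show "h \<in> topspace (compact_open_paths X)" using h by (simp add: topspace_CO)
    fix Z assume "Z \<in> S1 \<union> S2"
    then consider i where "i < n" "Z = {f \<in> path_space X. f ` {t i..t (Suc i)} \<subseteq> W i}"
        | i where "i \<le> n" "Z = {f \<in> path_space X. f ` {t i} \<subseteq> P i}"
      using SZ by blast
    then show "h \<in> Z"
    proof cases
      case 1 then show ?thesis using h W[of i] by auto
    next
      case 2 then show ?thesis using h P[of i] by auto
    qed
  qed
  show ?thesis
  proof (rule that[OF oM hM])
    fix h' assume h': "h' \<in> M"
    have h'P: "h' \<in> path_space X" using h' unfolding M_def topspace_CO by auto
    have h'W: "h' s \<in> W i" if "i < n" "s \<in> {t i..t (Suc i)}" for i s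
    proof -
      have "{f \<in> path_space X. f ` {t i..t (Suc i)} \<subseteq> W i} \<in> S1 \<union> S2" unfolding S1_def using that by auto
      then have "h' \<in> {f \<in> path_space X. f ` {t i..t (Suc i)} \<subseteq> W i}" using h' unfolding M_def by blast
      then show ?thesis using that by auto
    qed
    have h'Pi: "h' (t i) \<in> P i" if "i \<le> n" for i
    proof -
      have "{f \<in> path_space X. f ` {t i} \<subseteq> P i} \<in> S1 \<union> S2" unfolding S2_def using that by auto
      then have "h' \<in> {f \<in> path_space X. f ` {t i} \<subseteq> P i}" using h' unfolding M_def by blast
      then show ?thesis by auto
    qed
    have ph': "pth X h'" using h'P by (rule path_space_pth)
    have "\<forall>i. \<exists>ci. i \<le> n \<longrightarrow> pth X ci \<and> ci 0 = h (t i) \<and> ci 1 = h' (t i) \<and> (\<forall>s\<in>{0..1}. ci s \<in> P i)"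
    proof (intro allI)
      fix i
      show "\<exists>ci. i \<le> n \<longrightarrow> pth X ci \<and> ci 0 = h (t i) \<and> ci 1 = h' (t i) \<and> (\<forall>s\<in>{0..1}. ci s \<in> P i)"
      proof (cases "i \<le> n")
        case True
        then show ?thesis using pc_path[of X "P i" "h (t i)" "h' (t i)"] P[OF True] h'Pi[OF True] by blast
      qed simp
    qed
    then obtain c where c: "\<And>i. i \<le> n \<Longrightarrow> pth X (c i) \<and> c i 0 = h (t i) \<and> c i 1 = h' (t i) \<and> (\<forall>s\<in>{0..1}. c i s \<in> P i)"
      by metis
    have cp: "\<And>i. i \<le> n \<Longrightarrow> pth X (c i)" and c0: "\<And>i. i \<le> n \<Longrightarrow> c i 0 = h (t i)"
      and c1: "\<And>i. i \<le> n \<Longrightarrow> c i 1 = h' (t i)" and cP: "\<And>i s. i \<le> n \<Longrightarrow> s \<in> {0..1} \<Longrightarrow> c i s \<in> P i"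
      using c by auto
    define r where "r = rv (c 0)"
    have pr: "pth X r" unfolding r_def by (rule pth_rv[OF cp]) simp
    have r0: "r 0 = h' 0" and r1: "r 1 = h 0" unfolding r_def using c0[of 0] c1[of 0] t0 by auto
    have claim: "path_homotopic X (sb h' 0 (t k)) (jn (jn r (sb h 0 (t k))) (c k))" if "1 \<le> k" "k \<le> n" for k
      using that
    proof (induction k rule: nat_induct_at_least)
      case base
      show ?case
      proof (rule ph_ri[OF Wo(3)[OF n0]])
        show "pth X (sb h' 0 (t 1))" using pth_sb[OF ph' _ tI[of 1]] base n0 by simp
        show "pth X (jn (jn r (sb h 0 (t 1))) (c 1))"
          using pr pth_sb[OF ph _ tI[of 1]] cp[of 1] c0[of 1] r1 base n0 by (intro pth_jn) auto
        show "sb h' 0 (t 1) s \<in> W 0" if "s \<in> {0..1}" for s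
          by (rule sb_inV[OF _ _ that]) (use h'W[OF n0] t0 tmono[of 0 1] in auto)
        show "jn (jn r (sb h 0 (t 1))) (c 1) s \<in> W 0" if "s \<in> {0..1}" for s
        proof (rule jn_inV[OF _ _ that], rule jn_inV)
          show "r s' \<in> W 0" if "s' \<in> {0..1}" for s'
            unfolding r_def by (rule rv_inV[OF _ that]) (use cP[of 0] PW[OF n0] in auto)
          show "sb h 0 (t 1) s' \<in> W 0" if "s' \<in> {0..1}" for s'
            by (rule sb_inV[OF _ _ that]) (use W[OF n0] t0 tmono[of 0 1] in auto)
          show "c 1 s' \<in> W 0" if "s' \<in> {0..1}" for s'
            using cP[of 1 s'] PW'[of 1] that base n0 by auto
        qed
        show "sb h' 0 (t 1) 0 = jn (jn r (sb h 0 (t 1))) (c 1) 0" using r0 by simp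
        show "sb h' 0 (t 1) 1 = jn (jn r (sb h 0 (t 1))) (c 1) 1" using c1[of 1] base by simp
      qed
    next
      case (Suc k)
      have kn: "k < n" using Suc by simp
      define a where "a = t k"
      define b where "b = t (Suc k)"
      have aI: "a \<in> {0..1}" "b \<in> {0..1}" "a \<le> b" using tI[of k] tI[of "Suc k"] tmono[of k "Suc k"] kn Suc
        by (auto simp: a_def b_def)
      have IH: "path_homotopic X (sb h' 0 a) (jn (jn r (sb h 0 a)) (c k))" using Suc kn by (simp add: a_def)
      have pS': "pth X (sb h' 0 a)" "pth X (sb h' a b)" "pth X (sb h 0 a)" "pth X (sb h a b)"
        using pth_sb[OF ph'] pth_sb[OF ph] aI by auto
      have pck: "pth X (c k)" "pth X (c (Suc k))" using cp kn Suc by auto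
      have ck0: "c k 0 = h a" "c k 1 = h' a" "c (Suc k) 0 = h b" "c (Suc k) 1 = h' b"
        using c0[of k] c1[of k] c0[of "Suc k"] c1[of "Suc k"] kn Suc by (auto simp: a_def b_def)
      have prS: "pth X (jn r (sb h 0 a))" using pr pS' r1 by (intro pth_jn) auto
      have "path_homotopic X (sb h' 0 b) (jn (sb h' 0 a) (sb h' a b))"
        by (rule ph_sym, rule ph_sbjn[OF ph']) (use aI in auto)
      also have "path_homotopic X \<dots> (jn (jn (jn r (sb h 0 a)) (c k)) (sb h' a b))"
        by (rule ph_jn[OF IH ph_refl[OF pS'(2)]]) simp
      also have "path_homotopic X \<dots> (jn (jn r (sb h 0 a)) (jn (c k) (sb h' a b)))"
        by (rule ph_assoc) (use prS pck pS' ck0 in auto)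
      also have "path_homotopic X \<dots> (jn (jn r (sb h 0 a)) (jn (sb h a b) (c (Suc k))))"
      proof (rule ph_jn[OF ph_refl[OF prS]])
        show "path_homotopic X (jn (c k) (sb h' a b)) (jn (sb h a b) (c (Suc k)))"
        proof (rule ph_ri[OF Wo(3)[OF kn]])
          show "pth X (jn (c k) (sb h' a b))" using pck pS' ck0 by (intro pth_jn) auto
          show "pth X (jn (sb h a b) (c (Suc k)))" using pck pS' ck0 by (intro pth_jn) auto
          show "jn (c k) (sb h' a b) s \<in> W k" if "s \<in> {0..1}" for s
          proof (rule jn_inV[OF _ _ that])
            show "c k s' \<in> W k" if "s' \<in> {0..1}" for s' using cP[of k s'] PW[OF kn] that kn by auto
            show "sb h' a b s' \<in> W k" if "s' \<in> {0..1}" for s'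
              by (rule sb_inV[OF _ _ that]) (use h'W[OF kn] aI in \<open>auto simp: a_def b_def\<close>)
          qed
          show "jn (sb h a b) (c (Suc k)) s \<in> W k" if "s \<in> {0..1}" for s
          proof (rule jn_inV[OF _ _ that])
            show "c (Suc k) s' \<in> W k" if "s' \<in> {0..1}" for s'
              using cP[of "Suc k" s'] PW'[of "Suc k"] that Suc by auto
            show "sb h a b s' \<in> W k" if "s' \<in> {0..1}" for s'
              by (rule sb_inV[OF _ _ that]) (use W[OF kn] aI in \<open>auto simp: a_def b_def\<close>)
          qed
          show "jn (c k) (sb h' a b) 0 = jn (sb h a b) (c (Suc k)) 0" using ck0 by simp
          show "jn (c k) (sb h' a b) 1 = jn (sb h a b) (c (Suc k)) 1" using ck0 by simp
        qed
      qed (use ck0 in simp)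
      also have "path_homotopic X \<dots> (jn (jn (jn r (sb h 0 a)) (sb h a b)) (c (Suc k)))"
        by (rule ph_sym, rule ph_assoc) (use prS pck pS' ck0 in auto)
      also have "path_homotopic X \<dots> (jn (jn r (jn (sb h 0 a) (sb h a b))) (c (Suc k)))"
        by (rule ph_jn[OF ph_assoc ph_refl[OF pck(2)]]) (use pr pS' r1 ck0 in auto)
      also have "path_homotopic X \<dots> (jn (jn r (sb h 0 b)) (c (Suc k)))"
        by (rule ph_jn[OF ph_jn[OF ph_refl[OF pr] ph_sbjn[OF ph]] ph_refl[OF pck(2)]])
           (use aI r1 ck0 in auto)
      finally show ?case by (simp add: b_def)
    qed
    have hn: "path_homotopic X (sb h' 0 (t n)) (jn (jn r (sb h 0 (t n))) (c n))"
      using claim[of n] n0 by simp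
    have "path_homotopic X h' (sb h' 0 (t n))"
      by (rule ph_eqI[OF ph']) (auto simp: sb_def tn)
    also note hn
    also have "path_homotopic X (jn (jn r (sb h 0 (t n))) (c n)) (jn (jn r h) (c n))"
    proof (rule ph_jn[OF ph_jn[OF ph_refl[OF pr]] ph_refl[OF cp[OF order_refl]]])
      show "path_homotopic X (sb h 0 (t n)) h" by (rule ph_eqI[OF ph]) (auto simp: sb_def tn)
    qed (use r1 c0[of n] tn in auto)
    finally have fin: "path_homotopic X h' (jn (jn r h) (c n))" .
    show "\<exists>al be. pth X al \<and> pth X be \<and> (\<forall>t\<in>{0..1}. al t \<in> A) \<and> (\<forall>t\<in>{0..1}. be t \<in> B)
        \<and> al 1 = h 0 \<and> be 0 = h 1 \<and> path_homotopic X h' (jn (jn al h) be)"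
    proof (intro exI conjI)
      show "pth X r" by (rule pr)
      show "pth X (c n)" by (rule cp) simp
      show "\<forall>s\<in>{0..1}. r s \<in> A" unfolding r_def using cP[of 0] PA by (auto simp: rv_def)
      show "\<forall>s\<in>{0..1}. c n s \<in> B" using cP[of n] PB by auto
      show "r 1 = h 0" by (rule r1)
      show "c n 0 = h 1" using c0[of n] tn by simp
      show "path_homotopic X h' (jn (jn r h) (c n))" by (rule fin)
    qed
  qed
qed

lemma CO'_openin:
  "openin (CO'_topology X) S \<longleftrightarrow> S \<subseteq> path_class X ` topspace (compact_open_paths X) \<and>
     openin (compact_open_paths X) {x \<in> topspace (compact_open_paths X). path_class X x \<in> S}"
  unfolding CO'_topology_def quotient_topology_def by (simp add: istopology_quotient)

theorem corollary2p5:
  fixes X :: "'a topology"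
  assumes "locally_path_connected_space X"
    and "semilocally_simply_connected X"
  shows "open_map (compact_open_paths X) (CO'_topology X) (path_class X)"
  unfolding open_map_def
proof (intro allI impI)
  fix U assume U: "openin (compact_open_paths X) U"
  have Usub: "U \<subseteq> path_space X" using openin_subset[OF U] by (simp add: topspace_CO)
  show "openin (CO'_topology X) (path_class X ` U)"
    unfolding CO'_openin
  proof (intro conjI)
    show "path_class X ` U \<subseteq> path_class X ` topspace (compact_open_paths X)"
      using openin_subset[OF U] by blast
    show "openin (compact_open_paths X) {x \<in> topspace (compact_open_paths X). path_class X x \<in> path_class X ` U}"
    proof (subst openin_subopen, intro ballI)
      fix h assume "h \<in> {x \<in> topspace (compact_open_paths X). path_class X x \<in> path_class X ` U}"
      then obtain g where hP: "h \<in> path_space X" and gU: "g \<in> U" and hg: "path_class X h = path_class X g"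
        by (auto simp: topspace_CO)
      have gP: "g \<in> path_space X" using gU Usub by blast
      have "h \<in> path_class X h" using hP ph_refl[OF path_space_pth[OF hP]] by (simp add: path_class_def)
      then have "h \<in> path_class X g" using hg by simp
      then have gh: "path_homotopic X g h" by (simp add: path_class_def)
      have e: "h 0 = g 0" "h 1 = g 1" using ph_pth[OF gh] by auto
      obtain A B where A: "openin X A" "g 0 \<in> A" and B: "openin X B" "g 1 \<in> B"
        and AB: "\<And>al be. pth X al \<Longrightarrow> pth X be \<Longrightarrow> (\<And>t. t \<in> {0..1} \<Longrightarrow> al t \<in> A) \<Longrightarrow>
        (\<And>t. t \<in> {0..1} \<Longrightarrow> be t \<in> B) \<Longrightarrow> al 1 = g 0 \<Longrightarrow> be 0 = g 1 \<Longrightarrow>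
        \<exists>g'\<in>U. path_homotopic X g' (jn (jn al g) be)"
        by (rule L2[OF gP U gU], blast)
      have hA: "h 0 \<in> A" using A(2) e by simp
      have hB: "h 1 \<in> B" using B(2) e by simp
      obtain M where M: "openin (compact_open_paths X) M" "h \<in> M"
        "\<And>h'. h' \<in> M \<Longrightarrow> \<exists>al be. pth X al \<and> pth X be \<and> (\<forall>t\<in>{0..1}. al t \<in> A) \<and> (\<forall>t\<in>{0..1}. be t \<in> B)
        \<and> al 1 = h 0 \<and> be 0 = h 1 \<and> path_homotopic X h' (jn (jn al h) be)"
        by (rule L1[OF assms hP A(1) hA B(1) hB], blast)
      show "\<exists>T. openin (compact_open_paths X) T \<and> h \<in> T \<and>
             T \<subseteq> {x \<in> topspace (compact_open_paths X). path_class X x \<in> path_class X ` U}"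
      proof (intro exI conjI)
        show "openin (compact_open_paths X) M" "h \<in> M" by (rule M(1), rule M(2))
        show "M \<subseteq> {x \<in> topspace (compact_open_paths X). path_class X x \<in> path_class X ` U}"
        proof
          fix h' assume h': "h' \<in> M"
          have h'T: "h' \<in> topspace (compact_open_paths X)" using openin_subset[OF M(1)] h' by blast
          obtain al be where ab: "pth X al" "pth X be" "\<forall>t\<in>{0..1}. al t \<in> A" "\<forall>t\<in>{0..1}. be t \<in> B"
            "al 1 = h 0" "be 0 = h 1" "path_homotopic X h' (jn (jn al h) be)"
            using M(3)[OF h'] by blast
          obtain g' where g': "g' \<in> U" "path_homotopic X g' (jn (jn al g) be)"
            using AB[OF ab(1,2)] ab(3-6) e by auto
          have "path_homotopic X (jn (jn al h) be) (jn (jn al g) be)"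
          proof (rule ph_jn[OF ph_jn[OF ph_refl[OF ab(1)] ph_sym[OF gh]] ph_refl[OF ab(2)]])
            show "al 1 = h 0" by (rule ab(5))
            show "jn al h 1 = be 0" using ab(6) by simp
          qed
          then have "path_homotopic X h' g'" using ab(7) g'(2) ph_trans ph_sym by blast
          then have "path_class X h' = path_class X g'" by (rule class_eq)
          then show "h' \<in> {x \<in> topspace (compact_open_paths X). path_class X x \<in> path_class X ` U}"
            using h'T g'(1) by blast
        qed
      qed
    qed
  qed
qed

end
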